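(* Let $T$ be a triangle and let $\Gamma_{h,T}$ be an open line segment with endpoints on $\partial T$ that divides $T$ into two nonempty open parts $T_h^+$ and $T_h^-$; let $\mathbf{n}_h$ be the unit normal of $\Gamma_{h,T}$ pointing into $T_h^+$ and $\mathbf{t}_h=R_{-\pi/2}\mathbf{n}_h$. For $k=1,2$ consider pairs $(\mathbf{v}^{J_k},q^{J_k})$, piecewise defined by $\mathbf{v}^{J_k}=\mathbf{v}^{J_k,\pm}$, $q^{J_k}=q^{J_k,\pm}$ on $T_h^\pm$, with $\mathbf{v}^{J_k,\pm}\in P_1(T)^2$, $q^{J_k,\pm}\in P_0(T)$, such that $N_{i,T}(\mathbf{v}^{J_k},q^{J_k})=0$ for $i=1,\dots,7$, $[\![\mathbf{v}^{J_k,\pm}]\!]=\mathbf{0}$ on $\Gamma_{h,T}$, $[\![\nabla\cdot\mathbf{v}^{J_k,\pm}]\!]=0$, and $$[\![\sigma(1,\mathbf{v}^{J_1,\pm},q^{J_1,\pm})\mathbf{n}_h]\!]=\mathbf{n}_h,\qquad [\![\sigma(1,\mathbf{v}^{J_2,\pm},q^{J_2,\pm})\mathbf{n}_h]\!]=\mathbf{t}_h.$$ Then such pairs exist, are unique, and are given by $$\mathbf{v}^{J_1}=\mathbf{0},\quad q^{J_1}=z-\pi^0_{h,T}z,\qquad \mathbf{v}^{J_2}=(w-\pi^{CR}_{h,T}w)\mathbf{t}_h,\quad q^{J_2}=0,$$ where $z=-1$ on $T_h^+$, $z=0$ on $T_h^-$, and $w(\mathbf{x})=\operatorname{dist}(\mathbf{x},\Gamma_{h,T})$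 on $T_h^+$, $w=0$ on $T_h^-$.
   Context: $R_{-\pi/2}$ denotes rotation by $90^\circ$ clockwise. $\sigma(\mu,\mathbf{v},q)=2\mu\boldsymbol{\epsilon}(\mathbf{v})-q\mathbb{I}$ with $\boldsymbol{\epsilon}(\mathbf{v})=\frac12(\nabla\mathbf{v}+(\nabla\mathbf{v})^T)$. For polynomials $g^\pm$ (viewed as defined on all of $T$), $[\![g^\pm]\!]=g^+-g^-$. With edges $e_1,e_2,e_3$ of $T$ and $\mathbf{v}=(v_1,v_2)^T$, the degrees of freedom are $N_{i,T}(\mathbf{v},q)=|e_i|^{-1}\int_{e_i}v_1$, $N_{3+i,T}(\mathbf{v},q)=|e_i|^{-1}\int_{e_i}v_2$ ($i=1,2,3$), $N_{7,T}(\mathbf{v},q)=|T|^{-1}\int_T q$. For a function $v$ with well-defined edge integrals, $\pi^{CR}_{h,T}v$ is the unique element of $P_1(T)$ with $\int_{e_i}\pi^{CR}_{h,T}v=\int_{e_i}v$, $i=1,2,3$; $\pi^0_{h,T}q=|T|^{-1}\int_Tq$. *)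

theory Defs
  imports "HOL-Analysis.Analysis"
begin

type_synonym pt = "real^2"

text \<open>Scalar P1 polynomial (c, g): x \<mapsto> c + g . x ;
  vector P1 polynomial (c, M): x \<mapsto> c + M x, so that grad v = M (constant).\<close>
type_synonym p1s = "real \<times> (real^2)"
type_synonym p1v = "(real^2) \<times> (real^2^2)"

definition ev1 :: "p1s \<Rightarrow> pt \<Rightarrow> real" where
  "ev1 P x = fst P + snd P \<bullet> x"

definition ev2 :: "p1v \<Rightarrow> pt \<Rightarrow> real^2" where
  "ev2 V x = fst V + snd V *v x"

definition divg :: "real^2^2 \<Rightarrow> real" where
  "divg G = G$1$1 + G$2$2"

definition epsg :: "real^2^2 \<Rightarrow> real^2^2" where
  "epsg G = (1/2) *\<^sub>R (G + transpose G)"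

text \<open>sigma(mu, v, q) for v with gradient G and scalar pressure value q\<close>
definition sigmag :: "real \<Rightarrow> real^2^2 \<Rightarrow> real \<Rightarrow> real^2^2" where
  "sigmag mu G q = (2 * mu) *\<^sub>R epsg G - q *\<^sub>R mat 1"

definition rot_m90 :: "real^2 \<Rightarrow> real^2" where
  "rot_m90 n = vector [n$2, - (n$1)]"

definition tri :: "pt \<Rightarrow> pt \<Rightarrow> pt \<Rightarrow> pt set" where
  "tri a b c = interior (convex hull {a, b, c})"

definition tplus :: "pt \<Rightarrow> pt \<Rightarrow> pt \<Rightarrow> pt \<Rightarrow> pt \<Rightarrow> pt set" where
  "tplus a b c p n = {x \<in> tri a b c. n \<bullet> (x - p) > 0}"

definition tminus :: "pt \<Rightarrow> pt \<Rightarrow> pt \<Rightarrow> pt \<Rightarrow> pt \<Rightarrow> pt set" where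
  "tminus a b c p n = {x \<in> tri a b c. n \<bullet> (x - p) < 0}"

definition pw :: "pt \<Rightarrow> pt \<Rightarrow> 'a \<Rightarrow> 'a \<Rightarrow> pt \<Rightarrow> 'a" where
  "pw p n fp fm x = (if n \<bullet> (x - p) > 0 then fp else fm)"

text \<open>|e|^{-1} \<integral>_e f for the edge e = [a,b]\<close>
definition edge_avg :: "(pt \<Rightarrow> real) \<Rightarrow> pt \<Rightarrow> pt \<Rightarrow> real" where
  "edge_avg f a b = integral {0..1} (\<lambda>t. f (a + t *\<^sub>R (b - a)))"

definition cell_avg :: "pt set \<Rightarrow> (pt \<Rightarrow> real) \<Rightarrow> real" where
  "cell_avg T f = integral T f / measure lebesgue T"

definition piCR :: "pt \<Rightarrow> pt \<Rightarrow> pt \<Rightarrow> (pt \<Rightarrow> real) \<Rightarrow> p1s" where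
  "piCR a b c w = (THE P. edge_avg (ev1 P) b c = edge_avg w b c
                       \<and> edge_avg (ev1 P) c a = edge_avg w c a
                       \<and> edge_avg (ev1 P) a b = edge_avg w a b)"

text \<open>Degrees of freedom N_1..N_7 all vanish on the (piecewise) pair (v, q)\<close>
definition dofs_zero :: "pt \<Rightarrow> pt \<Rightarrow> pt \<Rightarrow> (pt \<Rightarrow> real^2) \<Rightarrow> (pt \<Rightarrow> real) \<Rightarrow> bool" where
  "dofs_zero a b c v q \<longleftrightarrow>
     (\<forall>(e1, e2) \<in> {(b, c), (c, a), (a, b)}.
        edge_avg (\<lambda>x. v x $ 1) e1 e2 = 0 \<and> edge_avg (\<lambda>x. v x $ 2) e1 e2 = 0)
     \<and> cell_avg (tri a b c) q = 0"

text \<open>The defining conditions of (v^{J}, q^{J}) with stress jump g; S = (v^+, v^-, q^+, q^-)\<close>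
definition jump_cond :: "pt \<Rightarrow> pt \<Rightarrow> pt \<Rightarrow> pt \<Rightarrow> pt \<Rightarrow> pt \<Rightarrow> real^2
      \<Rightarrow> p1v \<times> p1v \<times> real \<times> real \<Rightarrow> bool" where
  "jump_cond a b c p q n g S \<longleftrightarrow>
     (case S of (Vp, Vm, qp, qm) \<Rightarrow>
        dofs_zero a b c (\<lambda>x. pw p n (ev2 Vp x) (ev2 Vm x) x) (\<lambda>x. pw p n qp qm x)
      \<and> (\<forall>x \<in> open_segment p q. ev2 Vp x - ev2 Vm x = 0)
      \<and> divg (snd Vp) - divg (snd Vm) = 0
      \<and> sigmag 1 (snd Vp) qp *v n - sigmag 1 (snd Vm) qm *v n = g)"

end

theory Submission
  imports Defs
begin

lemma ev2_comp: "ev2 V x $ k = ev1 (fst V $ k, snd V $ k) x"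
  by (simp add: ev2_def ev1_def matrix_vector_mult_def inner_vec_def mult.commute)

lemma inner2: "(u::real^2) \<bullet> v = u$1* v$1 + u$2* v$2"
  by (simp add: inner_vec_def sum_2)

lemma det_nz:
  fixes a b c :: "real^2"
  assumes "\<not> collinear {a,b,c}"
  shows "(b-a)$1 * (c-a)$2 - (b-a)$2 * (c-a)$1 \<noteq> 0"
proof
  assume h: "(b-a)$1 * (c-a)$2 - (b-a)$2 * (c-a)$1 = 0"
  define u where "u = b - a"
  define v where "v = c - a"
  have "collinear {0, u, v}"
  proof (cases "u = 0")
    case True then show ?thesis by (simp add: collinear_lemma)
  next
    case False
    then have uu: "u$1*u$1 + u$2*u$2 \<noteq> 0"
      by (metis inner2 inner_eq_zero_iff)
    have "v = ((u \<bullet> v)/(u \<bullet> u)) *\<^sub>R u"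
    proof -
      have h': "u$1* v$2 - u$2* v$1 = 0" using h by (simp add: u_def v_def)
      have e1: "v$1 * (u$1*u$1 + u$2*u$2) = (u$1* v$1 + u$2* v$2) * u$1" using h' by algebra
      have e2: "v$2 * (u$1*u$1 + u$2*u$2) = (u$1* v$1 + u$2* v$2) * u$2" using h' by algebra
      have "v$1 = ((u \<bullet> v)/(u \<bullet> u)) * u$1" "v$2 = ((u \<bullet> v)/(u \<bullet> u)) * u$2"
        using e1 e2 uu by (simp_all add: inner2 field_simps)
      then show ?thesis by (auto simp: vec_eq_iff forall_2)
    qed
    then show ?thesis by (metis collinear_lemma)
  qed
  then have "collinear {b, a, c}" using collinear_3[of b a c] by (simp add: u_def v_def)
  then show False using assms by (simp add: insert_commute)
qed

lemma interp_uniq: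
  fixes a b c :: "real^2"
  assumes nc: "\<not> collinear {a,b,c}"
    and h1: "ev1 P ((1/2) *\<^sub>R (b + c)) = ev1 Q ((1/2) *\<^sub>R (b + c))"
    and h2: "ev1 P ((1/2) *\<^sub>R (c + a)) = ev1 Q ((1/2) *\<^sub>R (c + a))"
    and h3: "ev1 P ((1/2) *\<^sub>R (a + b)) = ev1 Q ((1/2) *\<^sub>R (a + b))"
  shows "P = Q"
proof -
  define D where "D = (b-a)$1 * (c-a)$2 - (b-a)$2 * (c-a)$1"
  have D: "D \<noteq> 0" using det_nz[OF nc] by (simp add: D_def)
  define g1 where "g1 = snd P $ 1 - snd Q $ 1"
  define g2 where "g2 = snd P $ 2 - snd Q $ 2"
  define e where "e = fst P - fst Q"
  have k1: "e + g1 * ((b$1 + c$1)/2) + g2 * ((b$2 + c$2)/2) = 0"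
    using h1 by (simp add: ev1_def inner2 g1_def g2_def e_def field_simps)
  have k2: "e + g1 * ((c$1 + a$1)/2) + g2 * ((c$2 + a$2)/2) = 0"
    using h2 by (simp add: ev1_def inner2 g1_def g2_def e_def field_simps)
  have k3: "e + g1 * ((a$1 + b$1)/2) + g2 * ((a$2 + b$2)/2) = 0"
    using h3 by (simp add: ev1_def inner2 g1_def g2_def e_def field_simps)
  have "g1 * D = 0" using k1 k2 k3 unfolding D_def by (simp add: algebra_simps) algebra
  then have G1: "g1 = 0" using D by simp
  have "g2 * D = 0" using k1 k2 k3 unfolding D_def by (simp add: algebra_simps) algebra
  then have G2: "g2 = 0" using D by simp
  have "e = 0" using k1 G1 G2 by simp
  then show ?thesis using G1 G2
    by (simp add: prod_eq_iff vec_eq_iff forall_2 g1_def g2_def e_def)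
qed

lemma interp_ex:
  fixes a b c :: "real^2"
  assumes nc: "\<not> collinear {a,b,c}"
  shows "\<exists>P. ev1 P ((1/2) *\<^sub>R (b + c)) = y1 \<and> ev1 P ((1/2) *\<^sub>R (c + a)) = y2
           \<and> ev1 P ((1/2) *\<^sub>R (a + b)) = y3"
proof -
  define u1 where "u1 = (b-a)$1"
  define u2 where "u2 = (b-a)$2"
  define v1 where "v1 = (c-a)$1"
  define v2 where "v2 = (c-a)$2"
  define D where "D = u1 * v2 - u2 * v1"
  have D: "D \<noteq> 0" using det_nz[OF nc] by (simp add: D_def u1_def u2_def v1_def v2_def)
  define r where "r = 2*(y1 - y2)"
  define s where "s = 2*(y1 - y3)"
  define g :: "real^2" where "g = vector [(r * v2 - s * u2)/D, (s * u1 - r * v1)/D]"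
  define e where "e = y3 - g \<bullet> ((1/2) *\<^sub>R (a + b))"
  have g1: "g$1 = (r * v2 - s * u2)/D" and g2: "g$2 = (s * u1 - r * v1)/D"
    by (simp_all add: g_def)
  have "g$1 * u1 + g$2 * u2 = ((r * v2 - s * u2) * u1 + (s * u1 - r * v1) * u2)/D"
    using D by (simp add: g1 g2 field_simps)
  also have "((r * v2 - s * u2) * u1 + (s * u1 - r * v1) * u2) = r * D"
    by (simp add: D_def algebra_simps)
  finally have gu: "g$1 * u1 + g$2 * u2 = r" using D by simp
  have "g$1 * v1 + g$2 * v2 = ((r * v2 - s * u2) * v1 + (s * u1 - r * v1) * v2)/D"
    using D by (simp add: g1 g2 field_simps)
  also have "((r * v2 - s * u2) * v1 + (s * u1 - r * v1) * v2) = s * D"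
    by (simp add: D_def algebra_simps)
  finally have gv: "g$1 * v1 + g$2 * v2 = s" using D by simp
  show ?thesis
  proof (intro exI[of _ "(e, g)"] conjI)
    show "ev1 (e, g) ((1/2) *\<^sub>R (a + b)) = y3" by (simp add: ev1_def e_def)
    show "ev1 (e, g) ((1/2) *\<^sub>R (b + c)) = y1"
      using gv unfolding ev1_def e_def s_def u1_def u2_def v1_def v2_def
      by (simp add: inner2 field_simps)
    show "ev1 (e, g) ((1/2) *\<^sub>R (c + a)) = y2"
      using gu gv unfolding ev1_def e_def r_def s_def u1_def u2_def v1_def v2_def
      by (simp add: inner2 field_simps)
  qed
qed

lemma int_affine01: "integral {0..1} (\<lambda>s::real. \<alpha> + \<beta> * s) = \<alpha> + \<beta> / 2"
proof -
  have "integral {0..1} (\<lambda>s::real. \<alpha> + \<beta> * s) = integral {0..1} (\<lambda>s::real. \<alpha>) + integral {0..1} (\<lambda>s. \<beta> * s)"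
    by (rule integral_add) (auto intro: integrable_continuous_real continuous_intros)
  also have "\<dots> = \<alpha> + \<beta> / 2" by (simp add: integral_ident)
  finally show ?thesis .
qed

lemma edge_affine: "edge_avg (ev1 P) e1 e2 = ev1 P ((1/2) *\<^sub>R (e1 + e2))"
proof -
  have "(\<lambda>t. ev1 P (e1 + t *\<^sub>R (e2 - e1))) = (\<lambda>t. (fst P + snd P \<bullet> e1) + (snd P \<bullet> (e2 - e1)) * t)"
    by (auto simp: ev1_def inner_add_right inner_diff_right algebra_simps)
  note eq = this
  show ?thesis unfolding edge_avg_def eq int_affine01
    by (simp add: ev1_def inner_add_right inner_diff_right field_simps)
qed

lemma int_if_open:
  fixes g1 g2 :: "real \<Rightarrow> real"
  assumes "continuous_on UNIV g1" "continuous_on UNIV g2" "open U"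
  shows "(\<lambda>s. if s \<in> U then g1 s else g2 s) integrable_on {0..1}"
proof -
  have c: "continuous_on {0..1} (\<lambda>s. g1 s - g2 s)"
    using assms by (auto intro!: continuous_intros elim: continuous_on_subset)
  have "set_integrable lebesgue {0..1} (\<lambda>s. g1 s - g2 s)"
    using absolutely_integrable_continuous_real[OF c] by (simp add: absolutely_integrable_on_def)
  then have "set_integrable lebesgue (U \<inter> {0..1}) (\<lambda>s. g1 s - g2 s)"
    by (rule set_integrable_subset) (use assms(3) in auto)
  then have "(\<lambda>s. g1 s - g2 s) integrable_on (U \<inter> {0..1})"
    by (rule set_lebesgue_integral_eq_integral)
  then have i1: "(\<lambda>s. if s \<in> U then g1 s - g2 s else 0) integrable_on {0..1}"
    by (simp add: integrable_restrict_Int)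
  have i2: "g2 integrable_on {0..1}"
    by (rule integrable_continuous_real, rule continuous_on_subset[OF assms(2)]) auto
  have "(\<lambda>s. (if s \<in> U then g1 s - g2 s else 0) + g2 s) integrable_on {0..1}"
    using integrable_add[OF i1 i2] by simp
  then show ?thesis by (rule integrable_eq) auto
qed

lemma int_pw_edge:
  fixes f1 f2 :: "real^2 \<Rightarrow> real"
  assumes "continuous_on UNIV f1" "continuous_on UNIV f2"
  shows "(\<lambda>s. pw p n (f1 (e1 + s *\<^sub>R (e2 - e1))) (f2 (e1 + s *\<^sub>R (e2 - e1))) (e1 + s *\<^sub>R (e2 - e1)))
           integrable_on {0..1}"
proof -
  let ?U = "{s::real. n \<bullet> (e1 + s *\<^sub>R (e2 - e1) - p) > 0}"
  have o: "open ?U"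
    by (rule open_Collect_less) (auto intro!: continuous_intros)
  have "(\<lambda>s. if s \<in> ?U then f1 (e1 + s *\<^sub>R (e2 - e1)) else f2 (e1 + s *\<^sub>R (e2 - e1))) integrable_on {0..1}"
    by (rule int_if_open[OF _ _ o]; rule continuous_on_compose2[OF assms(1)] continuous_on_compose2[OF assms(2)]; auto intro!: continuous_intros)
  then show ?thesis by (simp add: pw_def)
qed

lemma alg_core:
  fixes n1 n2 u1 u2 m11 m12 m21 m22 g1 g2 Q :: real
  assumes nn: "n1*n1 + n2*n2 = 1" and nu: "n1*u1 + n2*u2 = 0" and u: "u1 \<noteq> 0 \<or> u2 \<noteq> 0"
    and r1: "m11*u1 + m12*u2 = 0" and r2: "m21*u1 + m22*u2 = 0"
    and dv: "m11 + m22 = 0"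
    and s1: "2*m11*n1 + (m12 + m21)*n2 - Q*n1 = g1"
    and s2: "(m21 + m12)*n1 + 2*m22*n2 - Q*n2 = g2"
  shows "m11 = (g1 - (g1*n1+g2*n2)*n1)*n1" "m12 = (g1 - (g1*n1+g2*n2)*n1)*n2"
        "m21 = (g2 - (g1*n1+g2*n2)*n2)*n1" "m22 = (g2 - (g1*n1+g2*n2)*n2)*n2"
        "Q = -(g1*n1+g2*n2)"
proof -
  have det1: "n1*m12 - n2*m11 = 0"
  proof -
    have "(n1*m12 - n2*m11)*u1 = 0" using nu r1 by algebra
    moreover have "(n1*m12 - n2*m11)*u2 = 0" using nu r1 by algebra
    ultimately show ?thesis using u by auto
  qed
  have det2: "n1*m22 - n2*m21 = 0"
  proof -
    have "(n1*m22 - n2*m21)*u1 = 0" using nu r2 by algebra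
    moreover have "(n1*m22 - n2*m21)*u2 = 0" using nu r2 by algebra
    ultimately show ?thesis using u by auto
  qed
  define d1 where "d1 = m11*n1 + m12*n2"
  define d2 where "d2 = m21*n1 + m22*n2"
  have M11: "m11 = d1*n1" unfolding d1_def using nn det1 by algebra
  have M12: "m12 = d1*n2" unfolding d1_def using nn det1 by algebra
  have M21: "m21 = d2*n1" unfolding d2_def using nn det2 by algebra
  have M22: "m22 = d2*n2" unfolding d2_def using nn det2 by algebra
  have dn: "d1*n1 + d2*n2 = 0" using dv M11 M22 by simp
  have "g1 = d1*(n1*n1+n2*n2) + n1*(d1*n1+d2*n2) - Q*n1"
    using s1 unfolding M11 M12 M21 by (simp add: algebra_simps)
  then have G1: "g1 = d1 - Q*n1" using dn nn by simp
  have "g2 = d2*(n1*n1+n2*n2) + n2*(d1*n1+d2*n2) - Q*n2"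
    using s2 unfolding M22 M12 M21 by (simp add: algebra_simps)
  then have G2: "g2 = d2 - Q*n2" using dn nn by simp
  have "g1*n1+g2*n2 = (d1*n1+d2*n2) - Q*(n1*n1+n2*n2)" unfolding G1 G2 by (simp add: algebra_simps)
  then have GQ: "g1*n1+g2*n2 = -Q" using dn nn by simp
  show "Q = -(g1*n1+g2*n2)" using GQ by simp
  show "m11 = (g1 - (g1*n1+g2*n2)*n1)*n1" using M11 G1 GQ by simp
  show "m12 = (g1 - (g1*n1+g2*n2)*n1)*n2" using M12 G1 GQ by simp
  show "m21 = (g2 - (g1*n1+g2*n2)*n2)*n1" using M21 G2 GQ by simp
  show "m22 = (g2 - (g1*n1+g2*n2)*n2)*n2" using M22 G2 GQ by simp
qed

lemma ev2_c1: "ev2 V x $ 1 = fst V $ 1 + snd V $ 1 $ 1 * x $ 1 + snd V $ 1 $ 2 * x $ 2"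
  by (simp add: ev2_def matrix_vector_mult_def sum_2)
lemma ev2_c2: "ev2 V x $ 2 = fst V $ 2 + snd V $ 2 $ 1 * x $ 1 + snd V $ 2 $ 2 * x $ 2"
  by (simp add: ev2_def matrix_vector_mult_def sum_2)
lemma sig_c1: "(sigmag 1 G Q *v n) $ 1 = 2 * G$1$1 * n$1 + (G$1$2 + G$2$1) * n$2 - Q * n$1"
  by (simp add: sigmag_def epsg_def matrix_vector_mult_def sum_2 transpose_def mat_def algebra_simps)
lemma sig_c2: "(sigmag 1 G Q *v n) $ 2 = (G$2$1 + G$1$2) * n$1 + 2 * G$2$2 * n$2 - Q * n$2"
  by (simp add: sigmag_def epsg_def matrix_vector_mult_def sum_2 transpose_def mat_def algebra_simps)

lemma lin_aux: "A + (1/2)*X = 0 \<Longrightarrow> A + (1/4)*X = (0::real) \<Longrightarrow> X = 0 \<and> A = 0"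
  by linarith

lemma jump_struct:
  fixes p q n g :: "real^2"
  assumes pq: "p \<noteq> q" and nq: "n \<bullet> (q - p) = 0" and nn: "norm n = 1"
    and seg: "\<forall>x\<in>open_segment p q. ev2 Vp x - ev2 Vm x = 0"
    and dv: "divg (snd Vp) - divg (snd Vm) = 0"
    and st: "sigmag 1 (snd Vp) qp *v n - sigmag 1 (snd Vm) qm *v n = g"
  shows "ev2 Vp x - ev2 Vm x = (n \<bullet> (x - p)) *\<^sub>R (g - (g \<bullet> n) *\<^sub>R n)" "qp - qm = -(g \<bullet> n)"
proof -
  define m11 where "m11 = snd Vp$1$1 - snd Vm$1$1"
  define m12 where "m12 = snd Vp$1$2 - snd Vm$1$2"
  define m21 where "m21 = snd Vp$2$1 - snd Vm$2$1"
  define m22 where "m22 = snd Vp$2$2 - snd Vm$2$2"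
  define e1 where "e1 = fst Vp$1 - fst Vm$1"
  define e2 where "e2 = fst Vp$2 - fst Vm$2"
  have E1: "(ev2 Vp y - ev2 Vm y)$1 = e1 + m11*y$1 + m12*y$2" for y
    by (simp add: ev2_c1 m11_def m12_def e1_def algebra_simps)
  have E2: "(ev2 Vp y - ev2 Vm y)$2 = e2 + m21*y$1 + m22*y$2" for y
    by (simp add: ev2_c2 m21_def m22_def e2_def algebra_simps)
  have inseg: "(1 - s) *\<^sub>R p + s *\<^sub>R q \<in> open_segment p q" if "0 < s" "s < 1" for s
    using pq that by (auto simp: in_segment(2))
  have Z1: "e1 + m11*((1-s)*p$1 + s*q$1) + m12*((1-s)*p$2 + s*q$2) = 0"
    and Z2: "e2 + m21*((1-s)*p$1 + s*q$1) + m22*((1-s)*p$2 + s*q$2) = 0"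
    if "0 < s" "s < 1" for s
    using seg inseg[OF that] E1[of "(1 - s) *\<^sub>R p + s *\<^sub>R q"] E2[of "(1 - s) *\<^sub>R p + s *\<^sub>R q"]
    by auto
  define u1 where "u1 = q$1 - p$1"
  define u2 where "u2 = q$2 - p$2"
  have Z1': "(e1 + m11*p$1 + m12*p$2) + s*(m11*u1 + m12*u2) = 0"
   and Z2': "(e2 + m21*p$1 + m22*p$2) + s*(m21*u1 + m22*u2) = 0" if "0 < s" "s < 1" for s
    using Z1[OF that] Z2[OF that] by (simp_all add: u1_def u2_def algebra_simps)
  have a1: "(e1 + m11*p$1 + m12*p$2) + (1/2)*(m11*u1 + m12*u2) = 0"
    and a2: "(e1 + m11*p$1 + m12*p$2) + (1/4)*(m11*u1 + m12*u2) = 0"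
    and b1: "(e2 + m21*p$1 + m22*p$2) + (1/2)*(m21*u1 + m22*u2) = 0"
    and b2: "(e2 + m21*p$1 + m22*p$2) + (1/4)*(m21*u1 + m22*u2) = 0"
    by (rule Z1' Z2'; simp)+
  have r1: "m11*u1 + m12*u2 = 0" and P1: "e1 + m11*p$1 + m12*p$2 = 0"
    using lin_aux[OF a1 a2] by auto
  have r2: "m21*u1 + m22*u2 = 0" and P2: "e2 + m21*p$1 + m22*p$2 = 0"
    using lin_aux[OF b1 b2] by auto
  have nn': "n$1*n$1 + n$2*n$2 = 1"
    using nn by (metis inner2 norm_eq_1)
  have nu: "n$1*u1 + n$2*u2 = 0" using nq by (simp add: inner2 u1_def u2_def)
  have u: "u1 \<noteq> 0 \<or> u2 \<noteq> 0" using pq by (auto simp: u1_def u2_def vec_eq_iff forall_2)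
  have dv': "m11 + m22 = 0" using dv by (simp add: divg_def m11_def m22_def)
  have s1: "2*m11*n$1 + (m12 + m21)*n$2 - (qp - qm)*n$1 = g$1"
    using arg_cong[OF st, of "\<lambda>v. v$1"] by (simp add: sig_c1 m11_def m12_def m21_def algebra_simps)
  have s2: "(m21 + m12)*n$1 + 2*m22*n$2 - (qp - qm)*n$2 = g$2"
    using arg_cong[OF st, of "\<lambda>v. v$2"] by (simp add: sig_c2 m22_def m12_def m21_def algebra_simps)
  note C = alg_core[OF nn' nu u r1 r2 dv' s1 s2]
  show "qp - qm = -(g \<bullet> n)" using C(5) by (simp add: inner2)
  have x1: "(ev2 Vp x - ev2 Vm x)$1 = m11*(x$1 - p$1) + m12*(x$2 - p$2)"
    using E1[of x] P1 by (simp add: algebra_simps)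
  have x2: "(ev2 Vp x - ev2 Vm x)$2 = m21*(x$1 - p$1) + m22*(x$2 - p$2)"
    using E2[of x] P2 by (simp add: algebra_simps)
  show "ev2 Vp x - ev2 Vm x = (n \<bullet> (x - p)) *\<^sub>R (g - (g \<bullet> n) *\<^sub>R n)"
    unfolding vec_eq_iff forall_2
    using x1 x2 C(1-4) by (simp add: inner2 algebra_simps)
qed

lemma infdist_line:
  fixes p q n x :: "real^2"
  assumes pq: "p \<noteq> q" and nq: "n \<bullet> (q - p) = 0" and nn: "norm n = 1"
  shows "infdist x (affine hull (open_segment p q)) = \<bar>n \<bullet> (x - p)\<bar>"
proof -
  let ?L = "affine hull {p, q}"
  have L: "affine hull (open_segment p q) = ?L" using pq by simp
  have onL: "n \<bullet> (y - p) = 0" if yL: "y \<in> ?L" for y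
  proof -
    obtain u v where "y = u *\<^sub>R p + v *\<^sub>R q" "u + v = 1"
      using yL unfolding affine_hull_2 by blast
    then have "y - p = v *\<^sub>R (q - p)"
      by (simp add: algebra_simps flip: scaleR_add_left)
    then show ?thesis using nq by simp
  qed
  have ge: "\<bar>n \<bullet> (x - p)\<bar> \<le> dist x y" if "y \<in> ?L" for y
  proof -
    have "n \<bullet> (x - p) = n \<bullet> (x - y)" using onL[OF that] by (simp add: inner_diff_right)
    also have "\<bar>\<dots>\<bar> \<le> norm n * norm (x - y)" by (rule Cauchy_Schwarz_ineq2)
    finally show ?thesis using nn by (simp add: dist_norm)
  qed
  define w where "w = x - p"
  define c where "c = n$2 * (q-p)$1 - n$1 * (q-p)$2"
  have nn': "n$1*n$1 + n$2*n$2 = 1" using nn by (metis inner2 norm_eq_1)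
  have nu: "n$1*(q-p)$1 + n$2*(q-p)$2 = 0" using nq by (simp add: inner2)
  have u1: "(q-p)$1 = c * n$2" unfolding c_def using nn' nu by algebra
  have u2: "(q-p)$2 = - c * n$1" unfolding c_def using nn' nu by algebra
  have c0: "c \<noteq> 0" using pq u1 u2 by (auto simp: vec_eq_iff forall_2)
  define v where "v = (n$2 * w$1 - n$1 * w$2) / c"
  define y0 where "y0 = x - (n \<bullet> (x - p)) *\<^sub>R n"
  have "y0 - p = v *\<^sub>R (q - p)"
  proof -
    have e1: "w$1 - (n$1*w$1 + n$2*w$2) * n$1 = (n$2 * w$1 - n$1 * w$2) * n$2"
      using nn' by algebra
    have e2: "w$2 - (n$1*w$1 + n$2*w$2) * n$2 = -(n$2 * w$1 - n$1 * w$2) * n$1"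
      using nn' by algebra
    have "(y0 - p)$1 = w$1 - (n$1*w$1 + n$2*w$2) * n$1" by (simp add: y0_def w_def inner2)
    also have "\<dots> = (n$2 * w$1 - n$1 * w$2) * n$2" by (rule e1)
    also have "\<dots> = v * (q - p)$1" using c0 unfolding v_def u1 by simp
    finally have f1: "(y0 - p)$1 = v * (q - p)$1" .
    have "(y0 - p)$2 = w$2 - (n$1*w$1 + n$2*w$2) * n$2" by (simp add: y0_def w_def inner2)
    also have "\<dots> = -(n$2 * w$1 - n$1 * w$2) * n$1" by (rule e2)
    also have "\<dots> = v * (q - p)$2" using c0 unfolding v_def u2 by (simp add: field_simps)
    finally have f2: "(y0 - p)$2 = v * (q - p)$2" .
    show ?thesis using f1 f2 by (simp add: vec_eq_iff forall_2 del: vector_minus_component)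
  qed
  then have "y0 = (1 - v) *\<^sub>R p + v *\<^sub>R q" by (simp add: algebra_simps)
  then have y0L: "y0 \<in> ?L" unfolding affine_hull_2 by (intro CollectI exI[of _ "1 - v"] exI[of _ v]) simp
  have "dist x y0 = \<bar>n \<bullet> (x - p)\<bar>" using nn by (simp add: y0_def dist_norm)
  then have le: "infdist x ?L \<le> \<bar>n \<bullet> (x - p)\<bar>" using infdist_le[OF y0L, of x] by simp
  have Lne: "?L \<noteq> {}" using y0L by auto
  have "\<bar>n \<bullet> (x - p)\<bar> \<le> infdist x ?L"
    unfolding infdist_notempty[OF Lne]
    by (rule cINF_greatest) (use y0L ge in auto)
  then show ?thesis using le L by simp
qed

lemma tri_bounded: "bounded (tri a b c)"
  unfolding tri_def by (rule bounded_subset[OF _ interior_subset]) (simp add: finite_imp_bounded_convex_hull)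

lemma tri_open: "open (tri a b c)"
  unfolding tri_def by simp

lemma tri_lmeas: "tri a b c \<in> lmeasurable"
  using lmeasurable_open[OF tri_bounded tri_open] .

lemma tri_pos: assumes "x \<in> tri a b c" shows "0 < measure lebesgue (tri a b c)"
proof -
  have "\<not> negligible (tri a b c)" using assms tri_open[of a b c] open_not_negligible by blast
  then have "measure lebesgue (tri a b c) \<noteq> 0"
    using negligible_iff_measure0[of "tri a b c"] tri_lmeas by auto
  then show ?thesis using measure_nonneg[of lebesgue "tri a b c"] by linarith
qed

lemma pw_int_T: fixes A B :: real shows "(\<lambda>x. pw p n A B x) integrable_on tri a b c"
proof -
  let ?H = "{x::real^2. n \<bullet> (x - p) > 0}"
  have oH: "open ?H" by (rule open_Collect_less) (auto intro!: continuous_intros)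
  have "?H \<inter> tri a b c \<in> lmeasurable"
    by (rule lmeasurable_open) (auto intro: bounded_subset[OF tri_bounded] oH tri_open)
  then have "(\<lambda>x. A - B) integrable_on (?H \<inter> tri a b c)" by (rule integrable_on_const)
  then have i1: "(\<lambda>x. if x \<in> ?H then A - B else 0) integrable_on tri a b c"
    using integrable_restrict_Int[of ?H "\<lambda>x. A - B" "tri a b c"] by blast
  have i2: "(\<lambda>x. B) integrable_on tri a b c" by (rule integrable_on_const[OF tri_lmeas])
  have "(\<lambda>x. (if x \<in> ?H then A - B else 0) + B) integrable_on tri a b c"
    using integrable_add[OF i1 i2] by simp
  then show ?thesis by (rule integrable_eq) (auto simp: pw_def)
qed

lemma integral_const_T: "integral (tri a b c) (\<lambda>x. D) = D * measure lebesgue (tri a b c)"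
proof -
  have "integral (tri a b c) (\<lambda>x. D * 1) = D * integral (tri a b c) (\<lambda>x. 1::real)"
    by (rule integral_mult_right)
  then show ?thesis using lmeasure_integral[OF tri_lmeas] by simp
qed

lemma pw_comp: "(pw p n X Y x) $ k = pw p n (X $ k) (Y $ k) x"
  by (simp add: pw_def)

lemma cont_ev1: "continuous_on UNIV (ev1 P)"
  unfolding ev1_def by (intro continuous_intros)

lemma cont_ev2c: "continuous_on UNIV (\<lambda>x. ev2 V x $ k)"
  unfolding ev2_comp by (rule cont_ev1)

lemma int_ev1_edge: "(\<lambda>s. ev1 P (e1 + s *\<^sub>R (e2 - e1))) integrable_on {0..1}"
  by (rule integrable_continuous_real, rule continuous_on_compose2[OF cont_ev1]) (auto intro!: continuous_intros)

lemma edge_diff: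
  assumes D: "\<forall>x. ev2 Vp1 x - ev2 Vp2 x = ev2 Vm1 x - ev2 Vm2 x"
    and h1: "edge_avg (\<lambda>x. pw p n (ev2 Vp1 x) (ev2 Vm1 x) x $ k) e1 e2 = 0"
    and h2: "edge_avg (\<lambda>x. pw p n (ev2 Vp2 x) (ev2 Vm2 x) x $ k) e1 e2 = 0"
  shows "ev1 (fst Vm1 $ k, snd Vm1 $ k) ((1/2) *\<^sub>R (e1+e2)) = ev1 (fst Vm2 $ k, snd Vm2 $ k) ((1/2) *\<^sub>R (e1+e2))"
proof -
  define \<gamma> where "\<gamma> s = e1 + s *\<^sub>R (e2 - e1)" for s :: real
  define F1 where "F1 s = pw p n (ev2 Vp1 (\<gamma> s) $ k) (ev2 Vm1 (\<gamma> s) $ k) (\<gamma> s)" for s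
  define F2 where "F2 s = pw p n (ev2 Vp2 (\<gamma> s) $ k) (ev2 Vm2 (\<gamma> s) $ k) (\<gamma> s)" for s
  define P1 where "P1 = (fst Vm1 $ k, snd Vm1 $ k)"
  define P2 where "P2 = (fst Vm2 $ k, snd Vm2 $ k)"
  have i1: "F1 integrable_on {0..1}" unfolding F1_def \<gamma>_def
    by (rule int_pw_edge[OF cont_ev2c cont_ev2c])
  have i2: "F2 integrable_on {0..1}" unfolding F2_def \<gamma>_def
    by (rule int_pw_edge[OF cont_ev2c cont_ev2c])
  have I1: "integral {0..1} F1 = 0" using h1 unfolding edge_avg_def F1_def \<gamma>_def by (simp add: pw_comp)
  have I2: "integral {0..1} F2 = 0" using h2 unfolding edge_avg_def F2_def \<gamma>_def by (simp add: pw_comp)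
  have FD: "F1 s - F2 s = ev1 P1 (\<gamma> s) - ev1 P2 (\<gamma> s)" for s
  proof -
    have "(ev2 Vp1 (\<gamma> s) - ev2 Vp2 (\<gamma> s)) $ k = (ev2 Vm1 (\<gamma> s) - ev2 Vm2 (\<gamma> s)) $ k"
      using D by simp
    then show ?thesis unfolding F1_def F2_def P1_def P2_def pw_def
      by (auto simp: ev2_comp)
  qed
  have "integral {0..1} (\<lambda>s. ev1 P1 (\<gamma> s)) - integral {0..1} (\<lambda>s. ev1 P2 (\<gamma> s))
      = integral {0..1} (\<lambda>s. ev1 P1 (\<gamma> s) - ev1 P2 (\<gamma> s))"
    unfolding \<gamma>_def by (rule integral_diff[symmetric]) (rule int_ev1_edge)+
  also have "\<dots> = integral {0..1} (\<lambda>s. F1 s - F2 s)" using FD by simp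
  also have "\<dots> = 0" using integral_diff[OF i1 i2] I1 I2 by simp
  finally have "edge_avg (ev1 P1) e1 e2 = edge_avg (ev1 P2) e1 e2"
    unfolding edge_avg_def \<gamma>_def by simp
  then show ?thesis unfolding edge_affine P1_def P2_def .
qed

lemma affine_eq:
  assumes "\<forall>x. ev2 V x = ev2 W x" shows "V = W"
proof -
  have f: "fst V = fst W" using spec[OF assms, of 0] by (simp add: ev2_def)
  then have "\<forall>x. snd V *v x = snd W *v x" using assms by (simp add: ev2_def)
  then have "snd V = snd W" by (simp add: matrix_eq)
  then show ?thesis using f by (simp add: prod_eq_iff)
qed

lemma uniq:
  fixes a b c p q n g :: "real^2"
  assumes nc: "\<not> collinear {a,b,c}" and pq: "p \<noteq> q" and nq: "n \<bullet> (q - p) = 0" and nn: "norm n = 1"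
    and xT: "x0 \<in> tri a b c"
    and J1: "jump_cond a b c p q n g (Vp1, Vm1, qp1, qm1)"
    and J2: "jump_cond a b c p q n g (Vp2, Vm2, qp2, qm2)"
  shows "(Vp1, Vm1, qp1, qm1) = (Vp2, Vm2, qp2, qm2)"
proof -
  have d1: "dofs_zero a b c (\<lambda>x. pw p n (ev2 Vp1 x) (ev2 Vm1 x) x) (\<lambda>x. pw p n qp1 qm1 x)"
    and s1: "\<forall>x\<in>open_segment p q. ev2 Vp1 x - ev2 Vm1 x = 0"
    and v1: "divg (snd Vp1) - divg (snd Vm1) = 0"
    and t1: "sigmag 1 (snd Vp1) qp1 *v n - sigmag 1 (snd Vm1) qm1 *v n = g"
    using J1 unfolding jump_cond_def by auto
  have d2: "dofs_zero a b c (\<lambda>x. pw p n (ev2 Vp2 x) (ev2 Vm2 x) x) (\<lambda>x. pw p n qp2 qm2 x)"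
    and s2: "\<forall>x\<in>open_segment p q. ev2 Vp2 x - ev2 Vm2 x = 0"
    and v2: "divg (snd Vp2) - divg (snd Vm2) = 0"
    and t2: "sigmag 1 (snd Vp2) qp2 *v n - sigmag 1 (snd Vm2) qm2 *v n = g"
    using J2 unfolding jump_cond_def by auto
  note A1 = jump_struct[OF pq nq nn s1 v1 t1]
  note A2 = jump_struct[OF pq nq nn s2 v2 t2]
  have D: "\<forall>x. ev2 Vp1 x - ev2 Vp2 x = ev2 Vm1 x - ev2 Vm2 x"
  proof
    fix x
    have "ev2 Vp1 x - ev2 Vm1 x = ev2 Vp2 x - ev2 Vm2 x" using A1(1)[of x] A2(1)[of x] by simp
    then show "ev2 Vp1 x - ev2 Vp2 x = ev2 Vm1 x - ev2 Vm2 x"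
      by (auto simp: vec_eq_iff algebra_simps)
  qed
  have comp: "(fst Vm1 $ k, snd Vm1 $ k) = (fst Vm2 $ k, snd Vm2 $ k)" if k: "k = 1 \<or> k = 2" for k
  proof (rule interp_uniq[OF nc])
    show "ev1 (fst Vm1 $ k, snd Vm1 $ k) ((1/2) *\<^sub>R (b + c)) = ev1 (fst Vm2 $ k, snd Vm2 $ k) ((1/2) *\<^sub>R (b + c))"
      by (rule edge_diff[OF D]) (use d1 d2 k in \<open>auto simp: dofs_zero_def\<close>)
    show "ev1 (fst Vm1 $ k, snd Vm1 $ k) ((1/2) *\<^sub>R (c + a)) = ev1 (fst Vm2 $ k, snd Vm2 $ k) ((1/2) *\<^sub>R (c + a))"
      by (rule edge_diff[OF D]) (use d1 d2 k in \<open>auto simp: dofs_zero_def\<close>)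
    show "ev1 (fst Vm1 $ k, snd Vm1 $ k) ((1/2) *\<^sub>R (a + b)) = ev1 (fst Vm2 $ k, snd Vm2 $ k) ((1/2) *\<^sub>R (a + b))"
      by (rule edge_diff[OF D]) (use d1 d2 k in \<open>auto simp: dofs_zero_def\<close>)
  qed
  have Vm: "Vm1 = Vm2"
    using comp[of 1] comp[of 2] by (auto simp: prod_eq_iff vec_eq_iff forall_2)
  have Vp: "Vp1 = Vp2"
    by (rule affine_eq) (use D Vm in simp)
  let ?T = "tri a b c"
  let ?m = "measure lebesgue ?T"
  have m: "?m > 0" by (rule tri_pos[OF xT])
  have c1: "integral ?T (\<lambda>x. pw p n qp1 qm1 x) = 0"
    using d1 m by (simp add: dofs_zero_def cell_avg_def)
  have c2: "integral ?T (\<lambda>x. pw p n qp2 qm2 x) = 0"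
    using d2 m by (simp add: dofs_zero_def cell_avg_def)
  have qq: "qp1 - qp2 = qm1 - qm2" using A1(2) A2(2) by simp
  have "(\<lambda>x. pw p n qp1 qm1 x - pw p n qp2 qm2 x) = (\<lambda>x. qm1 - qm2)"
    using qq by (auto simp: pw_def)
  then have "(qm1 - qm2) * ?m = integral ?T (\<lambda>x. pw p n qp1 qm1 x - pw p n qp2 qm2 x)"
    by (simp add: integral_const_T)
  also have "\<dots> = 0" using integral_diff[OF pw_int_T pw_int_T] c1 c2 by simp
  finally have "qm1 = qm2" using m by simp
  then show ?thesis using Vm Vp qq by simp
qed

lemma uniq':
  fixes a b c p q n g :: "real^2"
  assumes nc: "\<not> collinear {a,b,c}" and pq: "p \<noteq> q" and nq: "n \<bullet> (q - p) = 0" and nn: "norm n = 1"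
    and xT: "x0 \<in> tri a b c"
    and J1: "jump_cond a b c p q n g S" and J2: "jump_cond a b c p q n g S'"
  shows "S = S'"
proof -
  obtain Vp1 Vm1 qp1 qm1 where e1: "S = (Vp1, Vm1, qp1, qm1)" by (cases S) auto
  obtain Vp2 Vm2 qp2 qm2 where e2: "S' = (Vp2, Vm2, qp2, qm2)" by (cases S') auto
  show ?thesis using uniq[OF nc pq nq nn xT J1[unfolded e1] J2[unfolded e2]] e1 e2 by simp
qed

lemma piCR_prop:
  assumes nc: "\<not> collinear {a,b,c}"
  shows "edge_avg (ev1 (piCR a b c w)) b c = edge_avg w b c
       \<and> edge_avg (ev1 (piCR a b c w)) c a = edge_avg w c a
       \<and> edge_avg (ev1 (piCR a b c w)) a b = edge_avg w a b"
proof -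
  have "\<exists>!P. edge_avg (ev1 P) b c = edge_avg w b c
                       \<and> edge_avg (ev1 P) c a = edge_avg w c a
                       \<and> edge_avg (ev1 P) a b = edge_avg w a b"
  proof -
    obtain P where "ev1 P ((1/2) *\<^sub>R (b + c)) = edge_avg w b c \<and> ev1 P ((1/2) *\<^sub>R (c + a)) = edge_avg w c a
           \<and> ev1 P ((1/2) *\<^sub>R (a + b)) = edge_avg w a b"
      using interp_ex[OF nc] by blast
    then show ?thesis
      by (intro ex1I[of _ P]) (auto simp: edge_affine intro: interp_uniq[OF nc])
  qed
  then show ?thesis unfolding piCR_def by (rule theI')
qed

theorem lemma4p2:
  fixes a b c p q n :: "real^2"
  assumes tri: "\<not> collinear {a, b, c}"
    and endpts: "p \<in> frontier (tri a b c)" "q \<in> frontier (tri a b c)" "p \<noteq> q"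
    and inside: "open_segment p q \<subseteq> tri a b c"
    and parts: "tplus a b c p n \<noteq> {}" "tminus a b c p n \<noteq> {}"
    and normal: "norm n = 1" "n \<bullet> (q - p) = 0"
  shows
   "let T = tri a b c; Tp = tplus a b c p n; Tm = tminus a b c p n;
        t = rot_m90 n;
        z = (\<lambda>x. pw p n (-1) 0 x);
        w = (\<lambda>x. pw p n (infdist x (affine hull (open_segment p q))) 0 x);
        pw_w = piCR a b c w
    in (\<exists>!S. jump_cond a b c p q n n S)
     \<and> (\<forall>Vp Vm qp qm. jump_cond a b c p q n n (Vp, Vm, qp, qm) \<longrightarrow>
          (\<forall>x\<in>Tp. ev2 Vp x = 0 \<and> qp = z x - cell_avg T z)
        \<and> (\<forall>x\<in>Tm. ev2 Vm x = 0 \<and> qm = z x - cell_avg T z))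
     \<and> (\<exists>!S. jump_cond a b c p q n t S)
     \<and> (\<forall>Vp Vm qp qm. jump_cond a b c p q n t (Vp, Vm, qp, qm) \<longrightarrow>
          (\<forall>x\<in>Tp. ev2 Vp x = (w x - ev1 pw_w x) *\<^sub>R t \<and> qp = 0)
        \<and> (\<forall>x\<in>Tm. ev2 Vm x = (w x - ev1 pw_w x) *\<^sub>R t \<and> qm = 0))"
proof -
  obtain x0 where x0: "x0 \<in> tri a b c" using parts(1) unfolding tplus_def by auto
  have pq: "p \<noteq> q" using endpts(3) .
  have nq: "n \<bullet> (q - p) = 0" using normal(2) .
  have nn: "norm n = 1" using normal(1) .
  have nn': "n$1*n$1 + n$2*n$2 = 1" using nn by (metis inner2 norm_eq_1)
  let ?T = "tri a b c"
  let ?m = "measure lebesgue ?T"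
  have m: "?m > 0" by (rule tri_pos[OF x0])
  define t where "t = rot_m90 n"
  have t1: "t$1 = n$2" and t2: "t$2 = - n$1" by (simp_all add: t_def rot_m90_def)
  define z where "z = (\<lambda>x. pw p n (-1::real) 0 x)"
  define w where "w = (\<lambda>x. pw p n (infdist x (affine hull (open_segment p q))) (0::real) x)"
  define A where "A = cell_avg ?T z"
  define P0 where "P0 = piCR a b c w"
  have U: "S = S'" if "jump_cond a b c p q n g S" "jump_cond a b c p q n g S'" for g S S'
    by (rule uniq'[OF tri pq nq nn x0 that])
  define S1 where "S1 = ((0::real^2, 0::real^2^2), (0::real^2, 0::real^2^2), -1 - A, -A)"
  have ev0: "ev2 (0::real^2, 0::real^2^2) x = 0" for x by (simp add: ev2_def)
  have J1: "jump_cond a b c p q n n S1"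
  proof -
    have "(\<lambda>x. pw p n (-1 - A) (-A) x) = (\<lambda>x. z x - A)" by (auto simp: z_def pw_def)
    moreover have "cell_avg ?T (\<lambda>x. z x - A) = 0"
    proof -
      have "integral ?T (\<lambda>x. z x - A) = integral ?T z - integral ?T (\<lambda>x. A)"
        unfolding z_def by (rule integral_diff[OF pw_int_T integrable_on_const[OF tri_lmeas]])
      also have "\<dots> = 0" using m by (simp add: integral_const_T A_def cell_avg_def)
      finally show ?thesis by (simp add: cell_avg_def)
    qed
    ultimately have ca: "cell_avg ?T (\<lambda>x. pw p n (-1 - A) (-A) x) = 0" by simp
    have pw0: "pw p n (0::real^2) 0 x = 0" for x by (simp add: pw_def)
    show ?thesis unfolding jump_cond_def S1_def
      using ca by (simp add: ev0 pw0 dofs_zero_def edge_avg_def divg_def vec_eq_iff forall_2 sig_c1 sig_c2 algebra_simps)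
  qed
  have C1: "(\<forall>x\<in>tplus a b c p n. ev2 Vp x = 0 \<and> qp = z x - cell_avg ?T z)
        \<and> (\<forall>x\<in>tminus a b c p n. ev2 Vm x = 0 \<and> qm = z x - cell_avg ?T z)"
    if "jump_cond a b c p q n n (Vp, Vm, qp, qm)" for Vp Vm qp qm
  proof -
    have "(Vp, Vm, qp, qm) = S1" using U[OF that J1] .
    then have "(\<forall>x\<in>tplus a b c p n. ev2 Vp x = 0 \<and> qp = z x - A)
        \<and> (\<forall>x\<in>tminus a b c p n. ev2 Vm x = 0 \<and> qm = z x - A)"
      by (auto simp: S1_def ev0 z_def pw_def tplus_def tminus_def)
    then show ?thesis by (simp only: A_def)
  qed
  have w_eq: "w x = pw p n (n \<bullet> (x - p)) 0 x" for x
    unfolding w_def pw_def infdist_line[OF pq nq nn] by simp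
  have cr: "edge_avg (ev1 P0) b c = edge_avg w b c \<and> edge_avg (ev1 P0) c a = edge_avg w c a
       \<and> edge_avg (ev1 P0) a b = edge_avg w a b" unfolding P0_def by (rule piCR_prop[OF tri])
  define Vm2 :: p1v where "Vm2 = (-(fst P0) *\<^sub>R t, \<chi> i j. -(t$i * snd P0$j))"
  define Vp2 :: p1v where "Vp2 = (-(n \<bullet> p + fst P0) *\<^sub>R t, \<chi> i j. t$i * (n$j - snd P0$j))"
  have evm: "ev2 Vm2 x = (- ev1 P0 x) *\<^sub>R t" for x
    by (simp add: Vm2_def vec_eq_iff forall_2 ev2_c1 ev2_c2 ev1_def inner2 algebra_simps)
  have evp: "ev2 Vp2 x = (n \<bullet> (x - p) - ev1 P0 x) *\<^sub>R t" for x
    by (simp add: Vp2_def vec_eq_iff forall_2 ev2_c1 ev2_c2 ev1_def inner2 algebra_simps)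
  have pwv: "pw p n (ev2 Vp2 x) (ev2 Vm2 x) x = (w x - ev1 P0 x) *\<^sub>R t" for x
    by (simp add: evp evm w_eq pw_def)
  have ew: "edge_avg (\<lambda>x. (w x - ev1 P0 x) * t $ k) e1 e2 = (edge_avg w e1 e2 - edge_avg (ev1 P0) e1 e2) * t$k"
    for e1 e2 k
  proof -
    have iw: "(\<lambda>s. w (e1 + s *\<^sub>R (e2 - e1))) integrable_on {0..1}"
    proof -
      have cf1: "continuous_on UNIV (\<lambda>x::real^2. n \<bullet> (x - p))" by (intro continuous_intros)
      have cf2: "continuous_on UNIV (\<lambda>x::real^2. 0::real)" by (intro continuous_intros)
      show ?thesis unfolding w_eq using int_pw_edge[OF cf1 cf2, of p n e1 e2] by simp
    qed
    have "edge_avg (\<lambda>x. (w x - ev1 P0 x) * t $ k) e1 e2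
        = integral {0..1} (\<lambda>s. (w (e1 + s *\<^sub>R (e2 - e1)) - ev1 P0 (e1 + s *\<^sub>R (e2 - e1))) * t$k)"
      by (simp add: edge_avg_def)
    also have "\<dots> = integral {0..1} (\<lambda>s. w (e1 + s *\<^sub>R (e2 - e1)) - ev1 P0 (e1 + s *\<^sub>R (e2 - e1))) * t$k"
      by (rule integral_mult_left)
    also have "\<dots> = (edge_avg w e1 e2 - edge_avg (ev1 P0) e1 e2) * t$k"
      unfolding edge_avg_def by (simp add: integral_diff[OF iw int_ev1_edge])
    finally show ?thesis .
  qed
  define S2 where "S2 = (Vp2, Vm2, 0::real, 0::real)"
  have J2: "jump_cond a b c p q n t S2"
  proof -
    have dz: "dofs_zero a b c (\<lambda>x. pw p n (ev2 Vp2 x) (ev2 Vm2 x) x) (\<lambda>x. pw p n (0::real) 0 x)"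
    proof -
      have q0: "(\<lambda>x. pw p n (0::real) 0 x) = (\<lambda>x. 0)" by (auto simp: pw_def)
      show ?thesis unfolding dofs_zero_def pwv q0
        using cr by (simp add: ew cell_avg_def)
    qed
    have sg: "\<forall>x\<in>open_segment p q. ev2 Vp2 x - ev2 Vm2 x = 0"
    proof
      fix x assume "x \<in> open_segment p q"
      then obtain u where "x = (1 - u) *\<^sub>R p + u *\<^sub>R q" by (auto simp: in_segment(2))
      then have "x - p = u *\<^sub>R (q - p)" by (simp add: algebra_simps)
      then have "n \<bullet> (x - p) = 0" using nq by simp
      then show "ev2 Vp2 x - ev2 Vm2 x = 0" by (simp add: evp evm algebra_simps)
    qed
    have dv: "divg (snd Vp2) - divg (snd Vm2) = 0"
      by (simp add: Vp2_def Vm2_def divg_def t1 t2 algebra_simps)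
    have st: "sigmag 1 (snd Vp2) 0 *v n - sigmag 1 (snd Vm2) 0 *v n = t"
    proof -
      have "2 * (n$2 * n$1) * n$1 + (n$2 * n$2 - n$1 * n$1) * n$2 = n$2 * (n$1*n$1 + n$2*n$2)"
        by (simp add: algebra_simps)
      moreover have "(- n$1 * n$1 + n$2 * n$2) * n$1 + 2 * (- n$1 * n$2) * n$2 = - n$1 * (n$1*n$1 + n$2*n$2)"
        by (simp add: algebra_simps)
      ultimately show ?thesis using nn'
        by (simp add: vec_eq_iff forall_2 sig_c1 sig_c2 Vp2_def Vm2_def t1 t2 algebra_simps)
    qed
    show ?thesis unfolding jump_cond_def S2_def using dz sg dv st by simp
  qed
  have C2: "(\<forall>x\<in>tplus a b c p n. ev2 Vp x = (w x - ev1 P0 x) *\<^sub>R t \<and> qp = 0)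
        \<and> (\<forall>x\<in>tminus a b c p n. ev2 Vm x = (w x - ev1 P0 x) *\<^sub>R t \<and> qm = 0)"
    if "jump_cond a b c p q n t (Vp, Vm, qp, qm)" for Vp Vm qp qm
  proof -
    have "(Vp, Vm, qp, qm) = S2" using U[OF that J2] .
    then show ?thesis
      by (auto simp: S2_def evp evm w_eq pw_def tplus_def tminus_def)
  qed
  have E1: "\<exists>!S. jump_cond a b c p q n n S" using J1 U by blast
  have E2: "\<exists>!S. jump_cond a b c p q n t S" using J2 U by blast
  show ?thesis
    unfolding Let_def t_def[symmetric] z_def[symmetric] w_def[symmetric] P0_def[symmetric]
    using E1 E2 C1 C2 by blast
qed

end
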